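(* For every $h\ge 1$, every ray $\rho$ with $|\rho|\le h$, and every neighbor $\tau$ of $\rho$ in $\Sigma_h$, one has $|u_\tau|\ge h-|u_\rho|$.
   Context: A ray is a half-line $\rho=\mathbb{R}_{\ge 0}v\subset\mathbb{R}^2$ with $v\in\mathbb{Z}^2\setminus\{0\}$; $u_\rho$ is its primitive lattice generator. On $\mathbb{Z}^2$ use the norm $|(x,y)|=\max\{|x|,|y|\}$, and $|\rho|=|u_\rho|$. $\Sigma_h$ is the complete fan whose rays are all rays $\rho$ with $|\rho|\le h$ and whose $2$-dimensional cones are spanned by angularly consecutive such rays. The neighbors of $\rho\in\Sigma_h(1)$ are the two rays of $\Sigma_h$ adjacent to $\rho$ in angular order. *)

theory Defs
  imports "HOL-Analysis.Analysis"
begin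

text \<open>A ray is represented by its primitive lattice generator u in Z^2
  (a nonzero integer vector with coprime coordinates).\<close>

definition primitive :: "int \<times> int \<Rightarrow> bool" where
  "primitive v \<longleftrightarrow> v \<noteq> (0,0) \<and> gcd (fst v) (snd v) = 1"

definition maxnorm :: "int \<times> int \<Rightarrow> int" where
  "maxnorm v = max \<bar>fst v\<bar> \<bar>snd v\<bar>"

definition rays :: "int \<Rightarrow> (int \<times> int) set" where
  "rays h = {u. primitive u \<and> maxnorm u \<le> h}"

definition ang :: "int \<times> int \<Rightarrow> real" where
  "ang v = Arg (Complex (of_int (fst v)) (of_int (snd v)))"

text \<open>Counterclockwise angular distance from u to v, in (0, 2 pi] (2 pi if equal angle).\<close>
definition ccw_dist :: "int \<times> int \<Rightarrow> int \<times> int \<Rightarrow> real" where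
  "ccw_dist u v = (if ang u < ang v then ang v - ang u else ang v - ang u + 2 * pi)"

definition neighbor :: "int \<Rightarrow> int \<times> int \<Rightarrow> int \<times> int \<Rightarrow> bool" where
  "neighbor h \<rho> \<tau> \<longleftrightarrow> \<tau> \<in> rays h \<and> \<tau> \<noteq> \<rho> \<and>
     ((\<forall>\<sigma>\<in>rays h. \<sigma> \<noteq> \<rho> \<longrightarrow> ccw_dist \<rho> \<tau> \<le> ccw_dist \<rho> \<sigma>) \<or>
      (\<forall>\<sigma>\<in>rays h. \<sigma> \<noteq> \<rho> \<longrightarrow> ccw_dist \<tau> \<rho> \<le> ccw_dist \<sigma> \<rho>))"

end

theory Submission
  imports Defs
begin

definition cz :: "int \<times> int \<Rightarrow> complex" where
  "cz u = Complex (of_int (fst u)) (of_int (snd u))"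

lemma cz_comp: "cmod (cz u) * cos (ang u) = of_int (fst u)" "cmod (cz u) * sin (ang u) = of_int (snd u)"
proof -
  have "rcis (cmod (cz u)) (ang u) = cz u" unfolding ang_def cz_def by (rule rcis_cmod_Arg)
  then show "cmod (cz u) * cos (ang u) = of_int (fst u)" "cmod (cz u) * sin (ang u) = of_int (snd u)"
    by (metis Re_rcis Im_rcis cz_def complex.sel)+
qed

lemma cz_pos: "u \<noteq> (0,0) \<Longrightarrow> cmod (cz u) > 0"
  unfolding cz_def by (cases u) (auto simp: complex_eq_iff)

lemma char:
  shows "0 < ccw_dist u v \<and> ccw_dist u v \<le> 2*pi
    \<and> of_int (fst u * snd v - snd u * fst v) = cmod (cz u) * cmod (cz v) * sin (ccw_dist u v)
    \<and> of_int (fst u * fst v + snd u * snd v) = cmod (cz u) * cmod (cz v) * cos (ccw_dist u v)"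
proof -
  have b1: "- pi < ang u \<and> ang u \<le> pi" "- pi < ang v \<and> ang v \<le> pi"
    unfolding ang_def by (rule Arg_bounded)+
  have s: "sin (ccw_dist u v) = sin (ang v - ang u)" "cos (ccw_dist u v) = cos (ang v - ang u)"
    unfolding ccw_dist_def by (auto simp: sin_periodic cos_periodic)
  have c1: "of_int (fst u * snd v - snd u * fst v) = cmod (cz u) * cmod (cz v) * sin (ang v - ang u)"
  proof -
    have "of_int (fst u * snd v - snd u * fst v) = (cmod (cz u) * cos (ang u)) * (cmod (cz v) * sin (ang v)) - (cmod (cz u) * sin (ang u)) * (cmod (cz v) * cos (ang v))"
      by (simp add: cz_comp)
    then show ?thesis unfolding sin_diff by (simp add: algebra_simps)
  qed
  have c2: "of_int (fst u * fst v + snd u * snd v) = cmod (cz u) * cmod (cz v) * cos (ang v - ang u)"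
  proof -
    have "of_int (fst u * fst v + snd u * snd v) = (cmod (cz u) * cos (ang u)) * (cmod (cz v) * cos (ang v)) + (cmod (cz u) * sin (ang u)) * (cmod (cz v) * sin (ang v))"
      by (simp add: cz_comp)
    then show ?thesis unfolding cos_diff by (simp add: algebra_simps)
  qed
  have "0 < ccw_dist u v \<and> ccw_dist u v \<le> 2*pi"
    unfolding ccw_dist_def using b1 by auto
  then show ?thesis using c1 c2 s by simp
qed

lemma ang_scale: "(g::int) > 0 \<Longrightarrow> ang (g*a, g*b) = ang (a,b)"
proof -
  assume g: "g > 0"
  have "Complex (of_int (g*a)) (of_int (g*b)) = of_real (of_int g) * Complex (of_int a) (of_int b)"
    by (simp add: complex_eq_iff)
  moreover have "Arg (of_real (of_int g) * Complex (of_int a) (of_int b)) = Arg (Complex (of_int a) (of_int b))"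
    using g by (intro Arg_times_of_real) simp
  ultimately show ?thesis unfolding ang_def by simp
qed

lemma lt_pi: "0 < d \<Longrightarrow> d \<le> 2*pi \<Longrightarrow> sin d > 0 \<Longrightarrow> d < pi"
proof (rule ccontr)
  assume "0 < d" "d \<le> 2*pi" "sin d > 0" "\<not> d < pi"
  then show False
    using sin_le_zero[of d] by (cases "d = 2*pi") auto
qed

lemma cmp_ang: "0 < d1 \<Longrightarrow> d1 < pi \<Longrightarrow> 0 < d2 \<Longrightarrow> d2 < pi \<Longrightarrow> sin (d1 - d2) > 0 \<Longrightarrow> d2 < d1"
proof (rule ccontr)
  assume "0 < d1" "d1 < pi" "0 < d2" "d2 < pi" "sin (d1 - d2) > 0" "\<not> d2 < d1"
  then have "0 \<le> sin (d2 - d1)" by (intro sin_ge_zero) auto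
  moreover have "sin (d1 - d2) = - sin (d2 - d1)" by (metis minus_diff_eq sin_minus)
  ultimately show False using \<open>sin (d1 - d2) > 0\<close> by linarith
qed

lemma prim_nz: "primitive u \<Longrightarrow> u \<noteq> (0,0)" unfolding primitive_def by simp

lemma reduce:
  fixes w1 w2 :: int
  assumes "(w1,w2) \<noteq> (0,0)" "maxnorm (w1,w2) \<le> h"
  shows "(w1 div gcd w1 w2, w2 div gcd w1 w2) \<in> rays h
         \<and> ang (w1 div gcd w1 w2, w2 div gcd w1 w2) = ang (w1,w2)"
proof -
  define g where "g = gcd w1 w2"
  have g: "g > 0" using assms(1) unfolding g_def by auto
  have e1: "w1 = g * (w1 div g)" and e2: "w2 = g * (w2 div g)" unfolding g_def by auto
  have nz: "(w1 div g, w2 div g) \<noteq> (0,0)" using assms(1) e1 e2 by (metis mult_zero_right prod.inject)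
  have cop: "gcd (w1 div g) (w2 div g) = 1"
    using div_gcd_coprime[of w1 w2] assms(1) unfolding g_def by (auto simp: coprime_iff_gcd_eq_1)
  have "\<bar>w1 div g\<bar> \<le> \<bar>w1\<bar>"
    by (subst (2) e1) (use g in \<open>auto simp: abs_mult intro: mult_le_cancel_right1[THEN iffD2]\<close>)
  moreover have "\<bar>w2 div g\<bar> \<le> \<bar>w2\<bar>"
    by (subst (2) e2) (use g in \<open>auto simp: abs_mult intro: mult_le_cancel_right1[THEN iffD2]\<close>)
  ultimately have "maxnorm (w1 div g, w2 div g) \<le> h" using assms(2) unfolding maxnorm_def by auto
  then have "(w1 div g, w2 div g) \<in> rays h" using nz cop unfolding rays_def primitive_def by auto
  moreover have "ang (w1,w2) = ang (w1 div g, w2 div g)"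
    using ang_scale[OF g, of "w1 div g" "w2 div g"] e1 e2 by simp
  ultimately show ?thesis unfolding g_def by simp
qed

lemma posS: fixes k :: int and x y q :: real
  assumes "of_int k = x*y*q" "k > 0" "x > 0" "y > 0" shows "q > 0"
  using assms by (metis mult_pos_pos of_int_0_less_iff zero_less_mult_pos)
lemma posK: fixes k :: int and x y q :: real
  assumes "of_int k = x*y*q" "q > 0" "x > 0" "y > 0" shows "k > 0"
  using assms by (metis mult_pos_pos of_int_0_less_iff)
lemma posS4: fixes k :: int and x1 x2 x3 x4 q :: real
  assumes "x1*x2*x3*x4*q = of_int k" "k > 0" "x1 > 0" "x2 > 0" "x3 > 0" "x4 > 0" shows "q > 0"
  using assms by (metis mult_pos_pos of_int_0_less_iff zero_less_mult_pos)

theorem mainTheorem10: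
  fixes h :: int and \<rho> \<tau> :: "int \<times> int"
  assumes "h \<ge> 1" and "\<rho> \<in> rays h" and "neighbor h \<rho> \<tau>"
  shows "maxnorm \<tau> \<ge> h - maxnorm \<rho>"
proof (rule ccontr)
  assume "\<not> ?thesis"
  then have lt: "maxnorm \<rho> + maxnorm \<tau> < h" by simp
  obtain a b where rho: "\<rho> = (a,b)" by fastforce
  obtain c e where tau: "\<tau> = (c,e)" by fastforce
  have tr: "\<tau> \<in> rays h" "\<tau> \<noteq> \<rho>" using assms(3) unfolding neighbor_def by auto
  have rnz: "\<rho> \<noteq> (0,0)" using assms(2) prim_nz unfolding rays_def by auto
  have tnz: "\<tau> \<noteq> (0,0)" using tr prim_nz unfolding rays_def by auto
  have Nr: "cmod (cz \<rho>) > 0" using cz_pos[OF rnz] .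
  have Nt: "cmod (cz \<tau>) > 0" using cz_pos[OF tnz] .
  have sq: "a*a + b*b > 0" using rnz rho
    by (auto simp: sum_squares_gt_zero_iff)
  define w where "w = (a+c, b+e)"
  have mw: "maxnorm w \<le> maxnorm \<rho> + maxnorm \<tau>" unfolding w_def rho tau maxnorm_def by auto
  from assms(3) consider
    (A) "\<forall>\<sigma>\<in>rays h. \<sigma> \<noteq> \<rho> \<longrightarrow> ccw_dist \<rho> \<tau> \<le> ccw_dist \<rho> \<sigma>"
  | (B) "\<forall>\<sigma>\<in>rays h. \<sigma> \<noteq> \<rho> \<longrightarrow> ccw_dist \<tau> \<rho> \<le> ccw_dist \<sigma> \<rho>"
    unfolding neighbor_def by blast
  then show False
  proof cases
    case A
    define \<sigma> where "\<sigma> = (-b, a)"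
    have "\<sigma> \<in> rays h" using assms(2) unfolding \<sigma>_def rho rays_def primitive_def maxnorm_def
      by (auto simp: gcd.commute)
    moreover have "\<sigma> \<noteq> \<rho>" using rnz unfolding \<sigma>_def rho by auto
    ultimately have le: "ccw_dist \<rho> \<tau> \<le> ccw_dist \<rho> \<sigma>" using A by auto
    have cs: "of_int (a*a + b*b) = cmod (cz \<rho>) * cmod (cz \<sigma>) * sin (ccw_dist \<rho> \<sigma>)"
      and ds: "0 < ccw_dist \<rho> \<sigma>" "ccw_dist \<rho> \<sigma> \<le> 2*pi"
      using char[of \<rho> \<sigma>] unfolding rho \<sigma>_def by auto
    have snz: "\<sigma> \<noteq> (0,0)" using rnz unfolding \<sigma>_def rho by auto
    have "sin (ccw_dist \<rho> \<sigma>) > 0" using posS[OF cs sq Nr cz_pos[OF snz]] .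
    then have "ccw_dist \<rho> \<sigma> < pi" using lt_pi ds by blast
    then have dt: "0 < ccw_dist \<rho> \<tau>" "ccw_dist \<rho> \<tau> < pi" using le char[of \<rho> \<tau>] by auto
    have ct: "of_int (a*e - b*c) = cmod (cz \<rho>) * cmod (cz \<tau>) * sin (ccw_dist \<rho> \<tau>)"
      and dtt: "of_int (a*c + b*e) = cmod (cz \<rho>) * cmod (cz \<tau>) * cos (ccw_dist \<rho> \<tau>)"
      using char[of \<rho> \<tau>] unfolding rho tau by auto
    have crt: "a*e - b*c > 0" using posK[OF ct sin_gt_zero[OF dt] Nr Nt] .
    have wnz: "w \<noteq> (0,0)"
    proof
      assume "w = (0,0)" then have "c = -a" "e = -b" unfolding w_def by auto
      then show False using crt by simp
    qed
    have Nw: "cmod (cz w) > 0" using cz_pos[OF wnz] .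
    have cw: "of_int (a*(b+e) - b*(a+c)) = cmod (cz \<rho>) * cmod (cz w) * sin (ccw_dist \<rho> w)"
      and dw: "of_int (a*(a+c) + b*(b+e)) = cmod (cz \<rho>) * cmod (cz w) * cos (ccw_dist \<rho> w)"
      and dwr: "0 < ccw_dist \<rho> w" "ccw_dist \<rho> w \<le> 2*pi"
      using char[of \<rho> w] unfolding rho w_def by auto
    have "a*(b+e) - b*(a+c) > 0" using crt by (simp add: algebra_simps)
    then have "sin (ccw_dist \<rho> w) > 0" using posS[OF cw _ Nr Nw] by blast
    then have dw2: "ccw_dist \<rho> w < pi" using lt_pi dwr by blast
    have "cmod (cz \<rho>) * cmod (cz \<rho>) * cmod (cz \<tau>) * cmod (cz w) * sin (ccw_dist \<rho> \<tau> - ccw_dist \<rho> w)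
        = (cmod (cz \<rho>) * cmod (cz \<tau>) * sin (ccw_dist \<rho> \<tau>)) * (cmod (cz \<rho>) * cmod (cz w) * cos (ccw_dist \<rho> w))
          - (cmod (cz \<rho>) * cmod (cz \<tau>) * cos (ccw_dist \<rho> \<tau>)) * (cmod (cz \<rho>) * cmod (cz w) * sin (ccw_dist \<rho> w))"
      by (simp add: sin_diff algebra_simps)
    also have "\<dots> = of_int ((a*e - b*c) * (a*(a+c) + b*(b+e)) - (a*c + b*e) * (a*(b+e) - b*(a+c)))"
      using ct dtt cw dw by simp
    also have "\<dots> = of_int ((a*a+b*b) * (a*e - b*c))" by (simp add: algebra_simps)
    finally have "sin (ccw_dist \<rho> \<tau> - ccw_dist \<rho> w) > 0"
      using sq crt Nr Nt Nw by (elim posS4) (auto intro: mult_pos_pos)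
    then have wlt: "ccw_dist \<rho> w < ccw_dist \<rho> \<tau>" using cmp_ang dt dwr(1) dw2 by blast
    define w' where "w' = (fst w div gcd (fst w) (snd w), snd w div gcd (fst w) (snd w))"
    have R: "w' \<in> rays h" "ang w' = ang w"
      using reduce[of "fst w" "snd w" h] wnz mw lt unfolding w'_def by auto
    have "ccw_dist \<rho> w' = ccw_dist \<rho> w" unfolding ccw_dist_def R(2) ..
    moreover have "w' \<noteq> \<rho>"
    proof
      assume "w' = \<rho>"
      then have "ccw_dist \<rho> w' = 2*pi" unfolding ccw_dist_def by simp
      then show False using \<open>ccw_dist \<rho> w' = ccw_dist \<rho> w\<close> dw2 by simp
    qed
    ultimately show False using A R(1) wlt by fastforce
  next
    case B
    define \<sigma> where "\<sigma> = (b, -a)"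
    have "\<sigma> \<in> rays h" using assms(2) unfolding \<sigma>_def rho rays_def primitive_def maxnorm_def
      by (auto simp: gcd.commute)
    moreover have "\<sigma> \<noteq> \<rho>" using rnz unfolding \<sigma>_def rho by auto
    ultimately have le: "ccw_dist \<tau> \<rho> \<le> ccw_dist \<sigma> \<rho>" using B by auto
    have cs: "of_int (a*a + b*b) = cmod (cz \<sigma>) * cmod (cz \<rho>) * sin (ccw_dist \<sigma> \<rho>)"
      and ds: "0 < ccw_dist \<sigma> \<rho>" "ccw_dist \<sigma> \<rho> \<le> 2*pi"
      using char[of \<sigma> \<rho>] unfolding rho \<sigma>_def by auto
    have snz: "\<sigma> \<noteq> (0,0)" using rnz unfolding \<sigma>_def rho by auto
    have "sin (ccw_dist \<sigma> \<rho>) > 0" using posS[OF cs sq cz_pos[OF snz] Nr] .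
    then have "ccw_dist \<sigma> \<rho> < pi" using lt_pi ds by blast
    then have dt: "0 < ccw_dist \<tau> \<rho>" "ccw_dist \<tau> \<rho> < pi" using le char[of \<tau> \<rho>] by auto
    have ct: "of_int (c*b - e*a) = cmod (cz \<tau>) * cmod (cz \<rho>) * sin (ccw_dist \<tau> \<rho>)"
      and dtt: "of_int (c*a + e*b) = cmod (cz \<tau>) * cmod (cz \<rho>) * cos (ccw_dist \<tau> \<rho>)"
      using char[of \<tau> \<rho>] unfolding rho tau by auto
    have crt: "c*b - e*a > 0" using posK[OF ct sin_gt_zero[OF dt] Nt Nr] .
    have wnz: "w \<noteq> (0,0)"
    proof
      assume "w = (0,0)" then have "c = -a" "e = -b" unfolding w_def by auto
      then show False using crt by simp
    qed
    have Nw: "cmod (cz w) > 0" using cz_pos[OF wnz] .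
    have cw: "of_int ((a+c)*b - (b+e)*a) = cmod (cz w) * cmod (cz \<rho>) * sin (ccw_dist w \<rho>)"
      and dw: "of_int ((a+c)*a + (b+e)*b) = cmod (cz w) * cmod (cz \<rho>) * cos (ccw_dist w \<rho>)"
      and dwr: "0 < ccw_dist w \<rho>" "ccw_dist w \<rho> \<le> 2*pi"
      using char[of w \<rho>] unfolding rho w_def by auto
    have "(a+c)*b - (b+e)*a > 0" using crt by (simp add: algebra_simps)
    then have "sin (ccw_dist w \<rho>) > 0" using posS[OF cw _ Nw Nr] by blast
    then have dw2: "ccw_dist w \<rho> < pi" using lt_pi dwr by blast
    have "cmod (cz \<rho>) * cmod (cz \<rho>) * cmod (cz \<tau>) * cmod (cz w) * sin (ccw_dist \<tau> \<rho> - ccw_dist w \<rho>)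
        = (cmod (cz \<tau>) * cmod (cz \<rho>) * sin (ccw_dist \<tau> \<rho>)) * (cmod (cz w) * cmod (cz \<rho>) * cos (ccw_dist w \<rho>))
          - (cmod (cz \<tau>) * cmod (cz \<rho>) * cos (ccw_dist \<tau> \<rho>)) * (cmod (cz w) * cmod (cz \<rho>) * sin (ccw_dist w \<rho>))"
      by (simp add: sin_diff algebra_simps)
    also have "\<dots> = of_int ((c*b - e*a) * ((a+c)*a + (b+e)*b) - (c*a + e*b) * ((a+c)*b - (b+e)*a))"
      using ct dtt cw dw by simp
    also have "\<dots> = of_int ((a*a+b*b) * (c*b - e*a))" by (simp add: algebra_simps)
    finally have "sin (ccw_dist \<tau> \<rho> - ccw_dist w \<rho>) > 0"
      using sq crt Nr Nt Nw by (elim posS4) (auto intro: mult_pos_pos)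
    then have wlt: "ccw_dist w \<rho> < ccw_dist \<tau> \<rho>" using cmp_ang dt dwr(1) dw2 by blast
    define w' where "w' = (fst w div gcd (fst w) (snd w), snd w div gcd (fst w) (snd w))"
    have R: "w' \<in> rays h" "ang w' = ang w"
      using reduce[of "fst w" "snd w" h] wnz mw lt unfolding w'_def by auto
    have "ccw_dist w' \<rho> = ccw_dist w \<rho>" unfolding ccw_dist_def R(2) ..
    moreover have "w' \<noteq> \<rho>"
    proof
      assume "w' = \<rho>"
      then have "ccw_dist w' \<rho> = 2*pi" unfolding ccw_dist_def by simp
      then show False using \<open>ccw_dist w' \<rho> = ccw_dist w \<rho>\<close> dw2 by simp
    qed
    ultimately show False using B R(1) wlt by fastforce
  qed
qed

end
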